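(* Let $U,V$ be disjoint finite sets, ${\bf s}\in\mathbb N^U$, ${\bf t}\in\mathbb N^V$, ${\bf d}=({\bf s},{\bf t})$, and let $\mathcal B({\bf s},{\bf t})$ be a uniformly random bipartite graph on $U\cup V$ with degree sequence ${\bf d}$. Let $H_1,H_2$ be two edge-disjoint bipartite graphs on $U\cup V$ with ${\bf d}^{H_1}\le{\bf d}$ componentwise, and let $uv\in(U\times V)\setminus(H_1\cup H_2)$. Define \[\xi=\frac{J({\bf d})+\Delta({\bf d})(1+\Delta(H_2))+(d_u-d_u^{H_1})(d_v-d_v^{H_1})}{M-e(H_1)}+\frac{e(H_2)\Delta({\bf s})\Delta({\bf t})}{(M-e(H_1))^2}.\] If $\xi=o(1)$, then \[\mathbb P\big(uv\in\mathcal B({\bf s},{\bf t})\,\big|\,H_1\subseteq\mathcal B({\bf s},{\bf t}),\ H_2\cap\mathcal B({\bf s},{\bf t})=\emptyset\big)=\frac{(d_u-d_u^{H_1})(d_v-d_v^{H_1})}{M-e(H_1)}\big(1+O(\xi)\big).\]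
   Context: $d_w$ denotes the prescribed degree of vertex $w$ (so $d_w=s_w$ for $w\in U$, $d_w=t_w$ for $w\in V$), ${\bf d}^{H}$ and $d^{H}_w$ denote the degree sequence of $H$ and the degree of $w$ in $H$, $e(H)$ and $\Delta(H)$ the number of edges and maximum degree of $H$, and $\Delta(\cdot)$ of a sequence its maximum entry. With entries ordered decreasingly, $s_1\ge s_2\ge\cdots$ and $t_1\ge t_2\ge\cdots$, $M=M({\bf d})=\sum_{u\in U}s_u=\sum_{v\in V}t_v$ and $J({\bf d})=\sum_{i=1}^{s_1}t_i+\sum_{j=1}^{t_1}s_j$. *)

theory Defs
  imports Complex_Main "HOL-Library.Multiset"
begin

text \<open>A degree sequence is a function
  d :: nat \<Rightarrow> nat, read on U (this is s) and on V (this is t).\<close>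

definition degG :: "(nat \<times> nat) set \<Rightarrow> nat \<Rightarrow> nat" where
  "degG G w = card {e \<in> G. fst e = w} + card {e \<in> G. snd e = w}"

definition bigraphs :: "nat set \<Rightarrow> nat set \<Rightarrow> (nat \<Rightarrow> nat) \<Rightarrow> (nat \<times> nat) set set" where
  "bigraphs U V d = {G. G \<subseteq> U \<times> V \<and> (\<forall>w \<in> U \<union> V. degG G w = d w)}"

definition maxdeg :: "nat set \<Rightarrow> nat set \<Rightarrow> (nat \<times> nat) set \<Rightarrow> nat" where
  "maxdeg U V G = Max (insert 0 (degG G ` (U \<union> V)))"

definition maxseq :: "nat set \<Rightarrow> (nat \<Rightarrow> nat) \<Rightarrow> nat" where
  "maxseq A d = Max (insert 0 (d ` A))"

definition desc_seq :: "nat set \<Rightarrow> (nat \<Rightarrow> nat) \<Rightarrow> nat list" where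
  "desc_seq A d = rev (sorted_list_of_multiset (image_mset d (mset_set A)))"

text \<open>M(d) = sum of s = sum of t.\<close>
definition Msum :: "nat set \<Rightarrow> (nat \<Rightarrow> nat) \<Rightarrow> nat" where
  "Msum U d = (\<Sum>u \<in> U. d u)"

text \<open>J(d) = \<Sum>_{i=1}^{s_1} t_i + \<Sum>_{j=1}^{t_1} s_j (entries beyond the length count as 0).\<close>
definition Jd :: "nat set \<Rightarrow> nat set \<Rightarrow> (nat \<Rightarrow> nat) \<Rightarrow> nat" where
  "Jd U V d = sum_list (take (maxseq U d) (desc_seq V d))
             + sum_list (take (maxseq V d) (desc_seq U d))"

definition cond_set :: "nat set \<Rightarrow> nat set \<Rightarrow> (nat \<Rightarrow> nat) \<Rightarrow> (nat \<times> nat) set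
    \<Rightarrow> (nat \<times> nat) set \<Rightarrow> (nat \<times> nat) set set" where
  "cond_set U V d H1 H2 = {G \<in> bigraphs U V d. H1 \<subseteq> G \<and> H2 \<inter> G = {}}"

definition cond_prob :: "nat set \<Rightarrow> nat set \<Rightarrow> (nat \<Rightarrow> nat) \<Rightarrow> (nat \<times> nat) set
    \<Rightarrow> (nat \<times> nat) set \<Rightarrow> nat \<times> nat \<Rightarrow> real" where
  "cond_prob U V d H1 H2 e =
     real (card {G \<in> cond_set U V d H1 H2. e \<in> G}) / real (card (cond_set U V d H1 H2))"

definition xi :: "nat set \<Rightarrow> nat set \<Rightarrow> (nat \<Rightarrow> nat) \<Rightarrow> (nat \<times> nat) set
    \<Rightarrow> (nat \<times> nat) set \<Rightarrow> nat \<Rightarrow> nat \<Rightarrow> real" where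
  "xi U V d H1 H2 u v =
     (real (Jd U V d) + real (maxseq (U \<union> V) d) * (1 + real (maxdeg U V H2))
        + (real (d u) - real (degG H1 u)) * (real (d v) - real (degG H1 v)))
       / (real (Msum U d) - real (card H1))
     + real (card H2) * real (maxseq U d) * real (maxseq V d)
       / (real (Msum U d) - real (card H1))\<^sup>2"

end

theory Submission
  imports Defs
begin


lemma sum_take_bound:
  fixes L :: "nat list"
  assumes "sorted_wrt (\<ge>) L" "X \<subseteq># mset L" "size X \<le> k"
  shows "sum_mset X \<le> sum_list (take k L)"
  using assms
proof (induction L arbitrary: X k)
  case Nil
  then show ?case by simp
next
  case (Cons h L)
  show ?case
  proof (cases "X = {#}")
    case True then show ?thesis by simp
  next
    case False
    then obtain k' where k: "k = Suc k'" using Cons.prems(3) False by (cases k) auto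
    define z where "z = (if h \<in># X then h else (SOME z. z \<in># X))"
    have zX: "z \<in># X" using False unfolding z_def
      by (metis multiset_nonemptyE someI_ex)
    have sub: "X - {#z#} \<subseteq># mset L"
    proof (cases "h \<in># X")
      case True
      then have "z = h" by (simp add: z_def)
      then show ?thesis using Cons.prems(2)
        by (metis add_mset_add_single mset.simps(2) subset_eq_diff_conv)
    next
      case nh: False
      have "X \<subseteq># mset L" using Cons.prems(2) nh
        by (metis Diff_eq_empty_iff_mset minus_add_mset_if_not_in_lhs mset.simps(2))
      then show ?thesis by (meson diff_subset_eq_self subset_mset.order_trans)
    qed
    have zh: "z \<le> h"
    proof -
      have "z \<in> set (h # L)" using zX Cons.prems(2) by (metis mset_subset_eqD set_mset_mset)
      then show ?thesis using Cons.prems(1) by auto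
    qed
    have sz: "size (X - {#z#}) \<le> k'" using zX Cons.prems(3) k
      by (simp add: size_Diff_submset)
    have IH: "sum_mset (X - {#z#}) \<le> sum_list (take k' L)"
      using Cons.IH[OF _ sub sz] Cons.prems(1) by simp
    have "X = add_mset z (X - {#z#})" using zX by simp
    then have "sum_mset X = z + sum_mset (X - {#z#})"
      by (metis sum_mset.add_mset)
    then show ?thesis using IH zh k by simp
  qed
qed

lemma desc_sorted: "sorted_wrt (\<ge>) (desc_seq A d)"
  unfolding desc_seq_def by (simp add: sorted_wrt_rev)

lemma desc_mset: "mset (desc_seq A d) = image_mset d (mset_set A)"
  unfolding desc_seq_def by simp

lemma top_sum:
  assumes "finite A" "Y \<subseteq> A" "card Y \<le> k"
  shows "sum d Y \<le> sum_list (take k (desc_seq A d))"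
proof -
  have "sum d Y = sum_mset (image_mset d (mset_set Y))" by (rule sum_unfold_sum_mset)
  also have "\<dots> \<le> sum_list (take k (desc_seq A d))"
  proof (rule sum_take_bound[OF desc_sorted])
    show "image_mset d (mset_set Y) \<subseteq># mset (desc_seq A d)"
      unfolding desc_mset using assms by (simp add: image_mset_subseteq_mono subset_imp_msubset_mset_set)
    show "size (image_mset d (mset_set Y)) \<le> k" using assms by simp
  qed
  finally show ?thesis .
qed

lemma maxseq_ge: "finite A \<Longrightarrow> w \<in> A \<Longrightarrow> d w \<le> maxseq A d"
  unfolding maxseq_def by (simp add: Max_ge_iff)

definition ind :: "nat \<times> nat \<Rightarrow> nat \<Rightarrow> nat" where
  "ind e w = (if fst e = w then 1 else 0) + (if snd e = w then 1 else 0)"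

context
  fixes U V :: "nat set" and d :: "nat \<Rightarrow> nat"
  assumes finU: "finite U" and finV: "finite V" and disj: "U \<inter> V = {}"
begin

lemma finG: "G \<subseteq> U \<times> V \<Longrightarrow> finite G"
  using finite_subset[OF _ finite_cartesian_product[OF finU finV]] .

lemma degG_U: "G \<subseteq> U \<times> V \<Longrightarrow> a \<in> U \<Longrightarrow> degG G a = card {e\<in>G. fst e = a}"
proof -
  assume "G \<subseteq> U \<times> V" "a \<in> U"
  then have "{e\<in>G. snd e = a} = {}" using disj by auto
  then show ?thesis unfolding degG_def by (simp only: card.empty add_0 add_0_right)
qed

lemma degG_V: "G \<subseteq> U \<times> V \<Longrightarrow> b \<in> V \<Longrightarrow> degG G b = card {e\<in>G. snd e = b}"
proof -
  assume "G \<subseteq> U \<times> V" "b \<in> V"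
  then have "{e\<in>G. fst e = b} = {}" using disj by auto
  then show ?thesis unfolding degG_def by (simp only: card.empty add_0 add_0_right)
qed

lemma fib_U: "card {e\<in>G. fst e = a} = card {y. (a,y)\<in>G}"
proof -
  have "{y. (a,y)\<in>G} = snd ` {e\<in>G. fst e = a}" by force
  moreover have "inj_on snd {e\<in>G. fst e = a}" by (auto simp: inj_on_def prod_eq_iff)
  ultimately show ?thesis by (simp add: card_image)
qed

lemma fib_V: "card {e\<in>G. snd e = b} = card {x. (x,b)\<in>G}"
proof -
  have "{x. (x,b)\<in>G} = fst ` {e\<in>G. snd e = b}" by force
  moreover have "inj_on fst {e\<in>G. snd e = b}" by (auto simp: inj_on_def prod_eq_iff)
  ultimately show ?thesis by (simp add: card_image)
qed

lemma card_snd_in: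
  assumes "G \<subseteq> U \<times> V" "Y \<subseteq> V"
  shows "card {e\<in>G. snd e \<in> Y} = (\<Sum>y\<in>Y. card {e\<in>G. snd e = y})"
proof -
  have "{e\<in>G. snd e \<in> Y} = (\<Union>y\<in>Y. {e\<in>G. snd e = y})" by auto
  moreover have "finite Y" using assms finV finite_subset by blast
  moreover have "finite G" using finG assms by blast
  moreover have "card (\<Union>y\<in>Y. {e\<in>G. snd e = y}) = (\<Sum>y\<in>Y. card {e\<in>G. snd e = y})"
    by (rule card_UN_disjoint) (use \<open>finite Y\<close> \<open>finite G\<close> in auto)
  ultimately show ?thesis by simp
qed

lemma card_fst_in:
  assumes "G \<subseteq> U \<times> V" "X \<subseteq> U"
  shows "card {e\<in>G. fst e \<in> X} = (\<Sum>x\<in>X. card {e\<in>G. fst e = x})"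
proof -
  have "{e\<in>G. fst e \<in> X} = (\<Union>x\<in>X. {e\<in>G. fst e = x})" by auto
  moreover have "finite X" using assms finU finite_subset by blast
  moreover have "finite G" using finG assms by blast
  moreover have "card (\<Union>x\<in>X. {e\<in>G. fst e = x}) = (\<Sum>x\<in>X. card {e\<in>G. fst e = x})"
    by (rule card_UN_disjoint) (use \<open>finite X\<close> \<open>finite G\<close> in auto)
  ultimately show ?thesis by simp
qed

lemma big_sub: "G \<in> bigraphs U V d \<Longrightarrow> G \<subseteq> U \<times> V"
  by (simp add: bigraphs_def)

lemma big_deg: "G \<in> bigraphs U V d \<Longrightarrow> w \<in> U \<union> V \<Longrightarrow> degG G w = d w"
  by (simp add: bigraphs_def)

lemma big_snd_sum:
  assumes "G \<in> bigraphs U V d" "Y \<subseteq> V"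
  shows "card {e\<in>G. snd e \<in> Y} = (\<Sum>y\<in>Y. d y)"
proof -
  have "card {e\<in>G. snd e \<in> Y} = (\<Sum>y\<in>Y. card {e\<in>G. snd e = y})"
    using card_snd_in big_sub assms by blast
  also have "\<dots> = (\<Sum>y\<in>Y. d y)"
  proof (rule sum.cong[OF refl])
    fix y assume "y \<in> Y"
    then have "y \<in> V" using assms by auto
    then show "card {e\<in>G. snd e = y} = d y"
      using degG_V[OF big_sub[OF assms(1)] \<open>y \<in> V\<close>] big_deg[OF assms(1)] by simp
  qed
  finally show ?thesis .
qed

lemma big_fst_sum:
  assumes "G \<in> bigraphs U V d" "X \<subseteq> U"
  shows "card {e\<in>G. fst e \<in> X} = (\<Sum>x\<in>X. d x)"
proof -
  have "card {e\<in>G. fst e \<in> X} = (\<Sum>x\<in>X. card {e\<in>G. fst e = x})"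
    using card_fst_in big_sub assms by blast
  also have "\<dots> = (\<Sum>x\<in>X. d x)"
  proof (rule sum.cong[OF refl])
    fix x assume "x \<in> X"
    then have "x \<in> U" using assms by auto
    then show "card {e\<in>G. fst e = x} = d x"
      using degG_U[OF big_sub[OF assms(1)] \<open>x \<in> U\<close>] big_deg[OF assms(1)] by simp
  qed
  finally show ?thesis .
qed

lemma big_card: "G \<in> bigraphs U V d \<Longrightarrow> card G = Msum U d"
proof -
  assume G: "G \<in> bigraphs U V d"
  then have "G = {e\<in>G. fst e \<in> U}" using big_sub[OF G] by auto
  then have "card G = card {e\<in>G. fst e \<in> U}" by simp
  also have "\<dots> = (\<Sum>x\<in>U. d x)" using big_fst_sum[OF G] by blast
  finally show ?thesis by (simp add: Msum_def)
qed

lemma nbrU_card: "G \<in> bigraphs U V d \<Longrightarrow> a \<in> U \<Longrightarrow> card {y. (a,y)\<in>G} = d a"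
  using fib_U[of G a] degG_U[OF big_sub, of G a] big_deg[of G a] by simp

lemma nbrV_card: "G \<in> bigraphs U V d \<Longrightarrow> b \<in> V \<Longrightarrow> card {x. (x,b)\<in>G} = d b"
  using fib_V[of G b] degG_V[OF big_sub, of G b] big_deg[of G b] by simp

lemma J_U:
  assumes G: "G \<in> bigraphs U V d" and a: "a \<in> U"
  shows "(\<Sum>y\<in>{y. (a,y)\<in>G}. d y) \<le> Jd U V d"
proof -
  have "{y. (a,y)\<in>G} \<subseteq> V" using big_sub[OF G] by auto
  moreover have "card {y. (a,y)\<in>G} \<le> maxseq U d" using nbrU_card[OF G a] maxseq_ge finU a by simp
  ultimately have "(\<Sum>y\<in>{y. (a,y)\<in>G}. d y) \<le> sum_list (take (maxseq U d) (desc_seq V d))"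
    using top_sum finV by blast
  then show ?thesis unfolding Jd_def by simp
qed

lemma J_V:
  assumes G: "G \<in> bigraphs U V d" and b: "b \<in> V"
  shows "(\<Sum>x\<in>{x. (x,b)\<in>G}. d x) \<le> Jd U V d"
proof -
  have "{x. (x,b)\<in>G} \<subseteq> U" using big_sub[OF G] by auto
  moreover have "card {x. (x,b)\<in>G} \<le> maxseq V d" using nbrV_card[OF G b] maxseq_ge finV b by simp
  ultimately have "(\<Sum>x\<in>{x. (x,b)\<in>G}. d x) \<le> sum_list (take (maxseq V d) (desc_seq U d))"
    using top_sum finU by blast
  then show ?thesis unfolding Jd_def by simp
qed


lemma finS: "finite (cond_set U V d H1 H2)"
proof -
  have "cond_set U V d H1 H2 \<subseteq> Pow (U \<times> V)"
    by (auto simp: cond_set_def bigraphs_def)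
  then show ?thesis using finU finV by (meson finite_Pow_iff finite_SigmaI finite_subset)
qed

lemma degG_sum: "finite G \<Longrightarrow> degG G w = (\<Sum>e\<in>G. ind e w)"
proof -
  assume fG: "finite G"
  have 1: "card {e\<in>G. fst e = w} = (\<Sum>e\<in>G. if fst e = w then 1 else 0)"
    using fG by (simp add: sum.inter_filter[symmetric])
  have 2: "card {e\<in>G. snd e = w} = (\<Sum>e\<in>G. if snd e = w then 1 else 0)"
    using fG by (simp add: sum.inter_filter[symmetric])
  show ?thesis unfolding degG_def ind_def 1 2 by (simp add: sum.distrib)
qed

lemma deg_switch:
  assumes fG: "finite G" and pq: "p \<in> G" "q \<in> G" "p \<noteq> q" "p' \<notin> G" "q' \<notin> G" "p' \<noteq> q'"
    and eq: "\<And>w. ind p w + ind q w = ind p' w + ind q' w"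
  shows "degG (G - {p,q} \<union> {p',q'}) w = degG G w"
proof -
  let ?K = "G - {p,q}"
  have fK: "finite ?K" using fG by simp
  have "(\<Sum>e\<in>?K \<union> {p',q'}. ind e w) = (\<Sum>e\<in>?K. ind e w) + (\<Sum>e\<in>{p',q'}. ind e w)"
    by (rule sum.union_disjoint) (use fK pq in auto)
  also have "\<dots> = (\<Sum>e\<in>?K. ind e w) + ind p' w + ind q' w" using pq by simp
  also have "\<dots> = (\<Sum>e\<in>?K. ind e w) + ind p w + ind q w" using eq[of w] by simp
  also have "\<dots> = (\<Sum>e\<in>?K. ind e w) + (\<Sum>e\<in>{p,q}. ind e w)" using pq by simp
  also have "\<dots> = (\<Sum>e\<in>G. ind e w)"
    using sum.subset_diff[of "{p,q}" G "\<lambda>e. ind e w"] fG pq by simp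
  finally show ?thesis using degG_sum fG fK by simp
qed

lemma sw_big:
  assumes G: "G \<in> bigraphs U V d" and pq: "p \<in> G" "q \<in> G" "p \<noteq> q" "p' \<notin> G" "q' \<notin> G" "p' \<noteq> q'"
    and inUV: "p' \<in> U \<times> V" "q' \<in> U \<times> V"
    and eq: "\<And>w. ind p w + ind q w = ind p' w + ind q' w"
  shows "G - {p,q} \<union> {p',q'} \<in> bigraphs U V d"
proof -
  have fG: "finite G" using finG big_sub G by blast
  have "G - {p,q} \<union> {p',q'} \<subseteq> U \<times> V" using big_sub[OF G] inUV by auto
  moreover have "\<forall>w\<in>U \<union> V. degG (G - {p,q} \<union> {p',q'}) w = d w"
    using deg_switch[OF fG pq eq] big_deg[OF G] by simp
  ultimately show ?thesis by (simp add: bigraphs_def)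
qed

definition FF :: "(nat \<times> nat) set \<Rightarrow> (nat \<times> nat) set \<Rightarrow> nat \<Rightarrow> nat \<Rightarrow> (nat \<times> nat) set \<Rightarrow> (nat \<times> nat) set" where
  "FF H1 H2 a b G = {(x,y). (x,y) \<in> G - H1 \<and> x \<noteq> a \<and> y \<noteq> b \<and> (a,y) \<notin> G \<and> (x,b) \<notin> G \<and> (a,y) \<notin> H2 \<and> (x,b) \<notin> H2}"

definition RR :: "(nat \<times> nat) set \<Rightarrow> (nat \<times> nat) set \<Rightarrow> nat \<Rightarrow> nat \<Rightarrow> (nat \<times> nat) set \<Rightarrow> (nat \<times> nat) set" where
  "RR H1 H2 a b G = {(x,y). (a,y) \<in> G - H1 \<and> (x,b) \<in> G - H1 \<and> (x,y) \<notin> G \<and> (x,y) \<notin> H2 \<and> x \<in> U \<and> y \<in> V}"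

lemma switch_card:
  assumes a: "a \<in> U" and b: "b \<in> V" and abH1: "(a,b) \<notin> H1" and abH2: "(a,b) \<notin> H2"
  shows "(\<Sum>G\<in>{G\<in>cond_set U V d H1 H2. (a,b)\<in>G}. card (FF H1 H2 a b G))
       = (\<Sum>G\<in>{G\<in>cond_set U V d H1 H2. (a,b)\<notin>G}. card (RR H1 H2 a b G))"
proof -
  let ?S = "cond_set U V d H1 H2"
  let ?A = "{G\<in>?S. (a,b)\<in>G}"
  let ?B = "{G\<in>?S. (a,b)\<notin>G}"
  let ?T = "Sigma ?A (FF H1 H2 a b)"
  let ?T' = "Sigma ?B (RR H1 H2 a b)"
  define phi where "phi = (\<lambda>(G::(nat\<times>nat) set, (x::nat,y::nat)). (G - {(a,b),(x,y)} \<union> {(a,y),(x,b)}, (x,y)))"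
  define psi where "psi = (\<lambda>(G::(nat\<times>nat) set, (x::nat,y::nat)). (G - {(a,y),(x,b)} \<union> {(a,b),(x,y)}, (x,y)))"
  have fS: "finite ?S" by (rule finS)
  have finFF: "finite (FF H1 H2 a b G)" if "G \<in> ?A" for G
  proof -
    have "FF H1 H2 a b G \<subseteq> G" by (auto simp: FF_def)
    moreover have "finite G" using that finG big_sub by (auto simp: cond_set_def)
    ultimately show ?thesis by (rule finite_subset)
  qed
  have finRR: "finite (RR H1 H2 a b G)" for G
  proof -
    have "RR H1 H2 a b G \<subseteq> U \<times> V" by (auto simp: RR_def)
    then show ?thesis using finU finV by (meson finite_SigmaI finite_subset)
  qed
  have m1: "phi t \<in> ?T'" if t: "t \<in> ?T" for t
  proof -
    obtain G x y where t_eq: "t = (G,(x,y))" by (metis prod.collapse)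
    have G: "G \<in> bigraphs U V d" and H1G: "H1 \<subseteq> G" and H2G: "H2 \<inter> G = {}" and abG: "(a,b) \<in> G"
      and xy: "(x,y) \<in> FF H1 H2 a b G"
      using t t_eq by (auto simp: cond_set_def)
    have xyG: "(x,y) \<in> G" "(x,y) \<notin> H1" "x \<noteq> a" "y \<noteq> b" "(a,y) \<notin> G" "(x,b) \<notin> G" "(a,y) \<notin> H2" "(x,b) \<notin> H2"
      using xy by (auto simp: FF_def)
    have xU: "x \<in> U" and yV: "y \<in> V" using big_sub[OF G] xyG(1) by auto
    have G': "G - {(a,b),(x,y)} \<union> {(a,y),(x,b)} \<in> bigraphs U V d"
      by (rule sw_big[OF G]) (use abG xyG a b xU yV in \<open>auto simp: ind_def\<close>)
    show ?thesis unfolding t_eq phi_def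
      using G' H1G H2G abG xyG abH1 abH2 xU yV by (auto simp: cond_set_def RR_def)
  qed
  have m2: "psi t \<in> ?T" if t: "t \<in> ?T'" for t
  proof -
    obtain G x y where t_eq: "t = (G,(x,y))" by (metis prod.collapse)
    have G: "G \<in> bigraphs U V d" and H1G: "H1 \<subseteq> G" and H2G: "H2 \<inter> G = {}" and abG: "(a,b) \<notin> G"
      and xy: "(x,y) \<in> RR H1 H2 a b G"
      using t t_eq by (auto simp: cond_set_def)
    have xyG: "(a,y) \<in> G" "(a,y) \<notin> H1" "(x,b) \<in> G" "(x,b) \<notin> H1" "(x,y) \<notin> G" "(x,y) \<notin> H2" "x \<in> U" "y \<in> V"
      using xy by (auto simp: RR_def)
    have ne: "x \<noteq> a" "y \<noteq> b" using xyG abG by auto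
    have G': "G - {(a,y),(x,b)} \<union> {(a,b),(x,y)} \<in> bigraphs U V d"
      by (rule sw_big[OF G]) (use abG xyG a b ne in \<open>auto simp: ind_def\<close>)
    show ?thesis unfolding t_eq psi_def
      using G' H1G H2G abG xyG abH1 abH2 ne by (auto simp: cond_set_def FF_def)
  qed
  have i1: "psi (phi t) = t" if t: "t \<in> ?T" for t
  proof -
    obtain G x y where t_eq: "t = (G,(x,y))" by (metis prod.collapse)
    have abG: "(a,b) \<in> G" and xy: "(x,y) \<in> FF H1 H2 a b G"
      using t t_eq by (auto simp: cond_set_def)
    have xyG: "(x,y) \<in> G" "x \<noteq> a" "y \<noteq> b" "(a,y) \<notin> G" "(x,b) \<notin> G"
      using xy by (auto simp: FF_def)
    show ?thesis unfolding t_eq phi_def psi_def using abG xyG by auto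
  qed
  have i2: "phi (psi t) = t" if t: "t \<in> ?T'" for t
  proof -
    obtain G x y where t_eq: "t = (G,(x,y))" by (metis prod.collapse)
    have abG: "(a,b) \<notin> G" and xy: "(x,y) \<in> RR H1 H2 a b G"
      using t t_eq by (auto simp: cond_set_def)
    have xyG: "(a,y) \<in> G" "(x,b) \<in> G" "(x,y) \<notin> G"
      using xy by (auto simp: RR_def)
    have ne: "x \<noteq> a" "y \<noteq> b" using xyG abG by auto
    show ?thesis unfolding t_eq phi_def psi_def using abG xyG ne by auto
  qed
  have "bij_betw phi ?T ?T'"
  proof (rule bij_betw_byWitness[where f' = psi])
    show "\<forall>t\<in>?T. psi (phi t) = t" using i1 by blast
    show "\<forall>t\<in>?T'. phi (psi t) = t" using i2 by blast
    show "phi ` ?T \<subseteq> ?T'" using m1 by blast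
    show "psi ` ?T' \<subseteq> ?T" using m2 by blast
  qed
  then have "card ?T = card ?T'" by (rule bij_betw_same_card)
  moreover have "card ?T = (\<Sum>G\<in>?A. card (FF H1 H2 a b G))"
    by (rule card_SigmaI) (use fS finFF in auto)
  moreover have "card ?T' = (\<Sum>G\<in>?B. card (RR H1 H2 a b G))"
    by (rule card_SigmaI) (use fS finRR in auto)
  ultimately show ?thesis by simp
qed

lemma resid_U:
  assumes G: "G \<in> bigraphs U V d" and H: "H1 \<subseteq> G" and a: "a \<in> U"
  shows "card {y. (a,y) \<in> G - H1} = d a - degG H1 a"
proof -
  have fG: "finite G" using finG big_sub G by blast
  have H1UV: "H1 \<subseteq> U \<times> V" using H big_sub[OF G] by blast
  have "card {y. (a,y) \<in> G - H1} = card {e\<in>G - H1. fst e = a}" using fib_U by metis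
  also have "{e\<in>G - H1. fst e = a} = {e\<in>G. fst e = a} - {e\<in>H1. fst e = a}" by auto
  also have "card \<dots> = card {e\<in>G. fst e = a} - card {e\<in>H1. fst e = a}"
    using fG H by (intro card_Diff_subset) (auto intro: rev_finite_subset[OF fG])
  also have "\<dots> = d a - degG H1 a"
    using degG_U[OF big_sub[OF G] a] degG_U[OF H1UV a] big_deg[OF G] a by simp
  finally show ?thesis .
qed

lemma resid_V:
  assumes G: "G \<in> bigraphs U V d" and H: "H1 \<subseteq> G" and b: "b \<in> V"
  shows "card {x. (x,b) \<in> G - H1} = d b - degG H1 b"
proof -
  have fG: "finite G" using finG big_sub G by blast
  have H1UV: "H1 \<subseteq> U \<times> V" using H big_sub[OF G] by blast
  have "card {x. (x,b) \<in> G - H1} = card {e\<in>G - H1. snd e = b}" using fib_V by metis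
  also have "{e\<in>G - H1. snd e = b} = {e\<in>G. snd e = b} - {e\<in>H1. snd e = b}" by auto
  also have "card \<dots> = card {e\<in>G. snd e = b} - card {e\<in>H1. snd e = b}"
    using fG H by (intro card_Diff_subset) (auto intro: rev_finite_subset[OF fG])
  also have "\<dots> = d b - degG H1 b"
    using degG_V[OF big_sub[OF G] b] degG_V[OF H1UV b] big_deg[OF G] b by simp
  finally show ?thesis .
qed

lemma RR_upper:
  assumes G: "G \<in> bigraphs U V d" and H: "H1 \<subseteq> G" and a: "a \<in> U" and b: "b \<in> V"
  shows "card (RR H1 H2 a b G) \<le> (d a - degG H1 a) * (d b - degG H1 b)"
proof -
  have fG: "finite G" using finG big_sub G by blast
  have "RR H1 H2 a b G \<subseteq> {x. (x,b) \<in> G - H1} \<times> {y. (a,y) \<in> G - H1}"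
    by (auto simp: RR_def)
  moreover have "finite ({x. (x,b) \<in> G - H1} \<times> {y. (a,y) \<in> G - H1})"
  proof -
    have "{x. (x,b) \<in> G - H1} \<subseteq> U" "{y. (a,y) \<in> G - H1} \<subseteq> V" using big_sub[OF G] by auto
    then show ?thesis using finU finV by (meson finite_SigmaI finite_subset)
  qed
  ultimately have "card (RR H1 H2 a b G) \<le> card ({x. (x,b) \<in> G - H1} \<times> {y. (a,y) \<in> G - H1})"
    by (rule card_mono[rotated])
  also have "\<dots> = (d b - degG H1 b) * (d a - degG H1 a)"
    using resid_U[OF G H a] resid_V[OF G H b] by (simp add: card_cartesian_product)
  finally show ?thesis by (simp add: mult.commute)
qed

lemma maxsq_UV: "w \<in> U \<union> V \<Longrightarrow> d w \<le> maxseq (U \<union> V) d"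
  using maxseq_ge finU finV by blast

lemma sum_le_Delta:
  assumes "Y \<subseteq> U \<union> V"
  shows "(\<Sum>y\<in>Y. d y) \<le> card Y * maxseq (U \<union> V) d"
proof -
  have "(\<Sum>y\<in>Y. d y) \<le> (\<Sum>y\<in>Y. maxseq (U \<union> V) d)"
    by (rule sum_mono) (use assms maxsq_UV in blast)
  then show ?thesis by simp
qed

lemma FF_lower:
  assumes G: "G \<in> bigraphs U V d" and H: "H1 \<subseteq> G" and H2: "H2 \<subseteq> U \<times> V"
    and a: "a \<in> U" and b: "b \<in> V" and D: "\<forall>w\<in>U \<union> V. degG H2 w \<le> D"
  shows "card (G - H1) \<le> card (FF H1 H2 a b G) + (2 * Jd U V d + 2 * maxseq (U \<union> V) d * (1 + D))"
proof -
  let ?De = "maxseq (U \<union> V) d"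
  let ?J = "Jd U V d"
  have GUV: "G \<subseteq> U \<times> V" by (rule big_sub[OF G])
  have fG: "finite G" using finG GUV by blast
  define B1 where "B1 = {e\<in>G. fst e = a}"
  define B2 where "B2 = {e\<in>G. snd e = b}"
  define B3 where "B3 = {e\<in>G. snd e \<in> {y. (a,y)\<in>G}}"
  define B4 where "B4 = {e\<in>G. fst e \<in> {x. (x,b)\<in>G}}"
  define B5 where "B5 = {e\<in>G. snd e \<in> {y. (a,y)\<in>H2}}"
  define B6 where "B6 = {e\<in>G. fst e \<in> {x. (x,b)\<in>H2}}"
  have c1: "card B1 \<le> ?De"
    using degG_U[OF GUV a] big_deg[OF G] a maxsq_UV unfolding B1_def by (metis UnI1)
  have c2: "card B2 \<le> ?De"
    using degG_V[OF GUV b] big_deg[OF G] b maxsq_UV unfolding B2_def by (metis UnI2)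
  have c3: "card B3 \<le> ?J"
  proof -
    have "{y. (a,y)\<in>G} \<subseteq> V" using GUV by auto
    then have "card B3 = (\<Sum>y\<in>{y. (a,y)\<in>G}. d y)" unfolding B3_def by (rule big_snd_sum[OF G])
    then show ?thesis using J_U[OF G a] by simp
  qed
  have c4: "card B4 \<le> ?J"
  proof -
    have "{x. (x,b)\<in>G} \<subseteq> U" using GUV by auto
    then have "card B4 = (\<Sum>x\<in>{x. (x,b)\<in>G}. d x)" unfolding B4_def by (rule big_fst_sum[OF G])
    then show ?thesis using J_V[OF G b] by simp
  qed
  have c5: "card B5 \<le> D * ?De"
  proof -
    have Y: "{y. (a,y)\<in>H2} \<subseteq> V" using H2 by auto
    then have "card B5 = (\<Sum>y\<in>{y. (a,y)\<in>H2}. d y)" unfolding B5_def by (rule big_snd_sum[OF G])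
    also have "\<dots> \<le> card {y. (a,y)\<in>H2} * ?De" by (rule sum_le_Delta) (use Y in auto)
    also have "card {y. (a,y)\<in>H2} = degG H2 a" using degG_U[OF H2 a] fib_U by metis
    also have "degG H2 a \<le> D" using D a by blast
    finally show ?thesis by simp
  qed
  have c6: "card B6 \<le> D * ?De"
  proof -
    have Y: "{x. (x,b)\<in>H2} \<subseteq> U" using H2 by auto
    then have "card B6 = (\<Sum>x\<in>{x. (x,b)\<in>H2}. d x)" unfolding B6_def by (rule big_fst_sum[OF G])
    also have "\<dots> \<le> card {x. (x,b)\<in>H2} * ?De" by (rule sum_le_Delta) (use Y in auto)
    also have "card {x. (x,b)\<in>H2} = degG H2 b" using degG_V[OF H2 b] fib_V by metis
    also have "degG H2 b \<le> D" using D b by blast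
    finally show ?thesis by simp
  qed
  have sub: "G - H1 \<subseteq> FF H1 H2 a b G \<union> B1 \<union> B2 \<union> B3 \<union> B4 \<union> B5 \<union> B6"
    unfolding B1_def B2_def B3_def B4_def B5_def B6_def FF_def by auto
  have fin: "finite (FF H1 H2 a b G \<union> B1 \<union> B2 \<union> B3 \<union> B4 \<union> B5 \<union> B6)"
    unfolding B1_def B2_def B3_def B4_def B5_def B6_def FF_def
    by (rule finite_subset[OF _ fG]) auto
  have "card (G - H1) \<le> card (FF H1 H2 a b G \<union> B1 \<union> B2 \<union> B3 \<union> B4 \<union> B5 \<union> B6)"
    by (rule card_mono[OF fin sub])
  also have "\<dots> \<le> card (FF H1 H2 a b G) + card B1 + card B2 + card B3 + card B4 + card B5 + card B6"
    using card_Un_le[of "FF H1 H2 a b G \<union> B1 \<union> B2 \<union> B3 \<union> B4 \<union> B5" B6]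
      card_Un_le[of "FF H1 H2 a b G \<union> B1 \<union> B2 \<union> B3 \<union> B4" B5]
      card_Un_le[of "FF H1 H2 a b G \<union> B1 \<union> B2 \<union> B3" B4]
      card_Un_le[of "FF H1 H2 a b G \<union> B1 \<union> B2" B3]
      card_Un_le[of "FF H1 H2 a b G \<union> B1" B2]
      card_Un_le[of "FF H1 H2 a b G" B1] by linarith
  also have "\<dots> \<le> card (FF H1 H2 a b G) + ?De + ?De + ?J + ?J + D * ?De + D * ?De"
    using c1 c2 c3 c4 c5 c6 by linarith
  also have "\<dots> = card (FF H1 H2 a b G) + (2 * ?J + 2 * ?De * (1 + D))"
    by (simp add: algebra_simps)
  finally show ?thesis .
qed

lemma UB:
  assumes H1: "H1 \<subseteq> U \<times> V" and H2: "H2 \<subseteq> U \<times> V" and a: "a \<in> U" and b: "b \<in> V"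
    and abH1: "(a,b) \<notin> H1" and D: "\<forall>w\<in>U \<union> V. degG H2 w \<le> D"
  shows "real (card {G\<in>cond_set U V d H1 H2. (a,b)\<in>G}) *
           (real (Msum U d) - real (card H1) - (2 * real (Jd U V d) + 2 * real (maxseq (U \<union> V) d) * (1 + real D)))
         \<le> real (card (cond_set U V d H1 H2)) * (real (d a - degG H1 a) * real (d b - degG H1 b))"
proof (cases "(a,b) \<in> H2")
  case True
  then have "{G\<in>cond_set U V d H1 H2. (a,b)\<in>G} = {}" by (auto simp: cond_set_def)
  then show ?thesis by (simp only: card.empty of_nat_0 mult_zero_left) (simp)
next
  case abH2: False
  let ?S = "cond_set U V d H1 H2"
  let ?A = "{G\<in>?S. (a,b)\<in>G}"
  let ?B = "{G\<in>?S. (a,b)\<notin>G}"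
  let ?E = "2 * real (Jd U V d) + 2 * real (maxseq (U \<union> V) d) * (1 + real D)"
  let ?R = "real (Msum U d) - real (card H1)"
  let ?r = "(d a - degG H1 a) * (d b - degG H1 b)"
  have fS: "finite ?S" by (rule finS)
  have each: "?R - ?E \<le> real (card (FF H1 H2 a b G))" if G: "G \<in> ?A" for G
  proof -
    have Gb: "G \<in> bigraphs U V d" and HG: "H1 \<subseteq> G" using G by (auto simp: cond_set_def)
    have fG: "finite G" using finG big_sub Gb by blast
    have "card (G - H1) = card G - card H1" using HG fG by (meson card_Diff_subset rev_finite_subset)
    moreover have "card H1 \<le> card G" using HG fG by (simp add: card_mono)
    moreover have "card G = Msum U d" by (rule big_card[OF Gb])
    ultimately have "real (card (G - H1)) = ?R" by simp
    moreover have "card (G - H1) \<le> card (FF H1 H2 a b G) + (2 * Jd U V d + 2 * maxseq (U \<union> V) d * (1 + D))"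
      by (rule FF_lower[OF Gb HG H2 a b D])
    then have "real (card (G - H1)) \<le> real (card (FF H1 H2 a b G)) + ?E"
      by (metis (mono_tags, lifting) of_nat_add of_nat_le_iff of_nat_mult of_nat_1 of_nat_numeral)
    ultimately show ?thesis by simp
  qed
  have "real (card ?A) * (?R - ?E) = (\<Sum>G\<in>?A. ?R - ?E)" by simp
  also have "\<dots> \<le> (\<Sum>G\<in>?A. real (card (FF H1 H2 a b G)))" by (rule sum_mono) (rule each)
  also have "\<dots> = real (\<Sum>G\<in>?A. card (FF H1 H2 a b G))" by simp
  also have "\<dots> = real (\<Sum>G\<in>?B. card (RR H1 H2 a b G))"
    using switch_card[OF a b abH1 abH2] by simp
  also have "\<dots> \<le> real (\<Sum>G\<in>?B. ?r)"
  proof -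
    have "(\<Sum>G\<in>?B. card (RR H1 H2 a b G)) \<le> (\<Sum>G\<in>?B. ?r)"
      by (rule sum_mono) (use RR_upper a b in \<open>auto simp: cond_set_def\<close>)
    then show ?thesis by linarith
  qed
  also have "\<dots> = real (card ?B) * real ?r" by simp
  also have "\<dots> \<le> real (card ?S) * real ?r"
  proof -
    have "card ?B \<le> card ?S" by (rule card_mono[OF fS]) blast
    then show ?thesis by (intro mult_right_mono) auto
  qed
  finally show ?thesis by simp
qed

lemma cond_ins2: "cond_set U V d H1 (insert e H2) = {G\<in>cond_set U V d H1 H2. e \<notin> G}"
  by (auto simp: cond_set_def)

lemma cond_ins1: "cond_set U V d (insert e H1) H2 = {G\<in>cond_set U V d H1 H2. e \<in> G}"
  by (auto simp: cond_set_def)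

lemma degG_insert:
  assumes "finite H" "fst e \<noteq> snd e"
  shows "degG (insert e H) w \<le> degG H w + 1"
proof (cases "e \<in> H")
  case True then show ?thesis by (simp add: insert_absorb)
next
  case False
  have "degG (insert e H) w = ind e w + degG H w"
    using degG_sum assms False by simp
  moreover have "ind e w \<le> 1" using assms(2) by (auto simp: ind_def)
  ultimately show ?thesis by simp
qed

lemma degG_mono:
  assumes "finite H'" "H \<subseteq> H'"
  shows "degG H w \<le> degG H' w"
proof -
  have "card {e\<in>H. fst e = w} \<le> card {e\<in>H'. fst e = w}"
    by (rule card_mono) (use assms in auto)
  moreover have "card {e\<in>H. snd e = w} \<le> card {e\<in>H'. snd e = w}"
    by (rule card_mono) (use assms in auto)
  ultimately show ?thesis by (simp add: degG_def)
qed

lemma maxdeg_ge: "w \<in> U \<union> V \<Longrightarrow> degG H w \<le> maxdeg U V H"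
  unfolding maxdeg_def using finU finV by (simp add: Max_ge_iff)

lemma sum_card_swap:
  fixes w :: "'b \<Rightarrow> real"
  assumes "finite A" "finite P"
  shows "(\<Sum>G\<in>A. \<Sum>p\<in>{p\<in>P. Q G p}. w p) = (\<Sum>p\<in>P. real (card {G\<in>A. Q G p}) * w p)"
proof -
  have "(\<Sum>G\<in>A. \<Sum>p\<in>{p\<in>P. Q G p}. w p) = (\<Sum>G\<in>A. \<Sum>p\<in>P. if Q G p then w p else 0)"
    using assms by (simp add: sum.inter_filter)
  also have "\<dots> = (\<Sum>p\<in>P. \<Sum>G\<in>A. if Q G p then w p else 0)" by (rule sum.swap)
  also have "\<dots> = (\<Sum>p\<in>P. real (card {G\<in>A. Q G p}) * w p)"
    by (intro sum.cong refl) (simp add: sum.inter_filter[symmetric] assms)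
  finally show ?thesis .
qed

context
  fixes H1 H2 :: "(nat \<times> nat) set" and a b :: nat and Rl :: real
  assumes H1: "H1 \<subseteq> U \<times> V" and H2: "H2 \<subseteq> U \<times> V" and a: "a \<in> U" and b: "b \<in> V"
    and abH1: "(a,b) \<notin> H1" and abH2: "(a,b) \<notin> H2"
    and Rl0: "0 \<le> Rl"
    and RlE: "Rl \<le> real (Msum U d) - real (card H1) - 2
       - (2 * real (Jd U V d) + 2 * real (maxseq (U \<union> V) d) * (1 + (real (maxdeg U V H2) + 1)))"
begin

lemma UBc:
  assumes H1': "H1' \<subseteq> U \<times> V" "card H1' \<le> card H1 + 2" and p: "p \<in> U" and q: "q \<in> V"
    and pq: "(p,q) \<notin> H1'"
  shows "real (card {G\<in>cond_set U V d H1' (insert (a,b) H2). (p,q)\<in>G}) * Rl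
     \<le> real (card (cond_set U V d H1' (insert (a,b) H2))) * (real (d p - degG H1' p) * real (d q - degG H1' q))"
proof -
  let ?D = "maxdeg U V H2 + 1"
  have H2': "insert (a,b) H2 \<subseteq> U \<times> V" using H2 a b by auto
  have ab: "fst (a,b) \<noteq> snd (a,b)" using a b disj by auto
  have fH2: "finite H2" using finG H2 by blast
  have D: "\<forall>w\<in>U \<union> V. degG (insert (a,b) H2) w \<le> ?D"
    using degG_insert[OF fH2 ab] maxdeg_ge by (meson add_le_mono1 order_trans)
  have u: "real (card {G\<in>cond_set U V d H1' (insert (a,b) H2). (p,q)\<in>G}) *
           (real (Msum U d) - real (card H1') - (2 * real (Jd U V d) + 2 * real (maxseq (U \<union> V) d) * (1 + real ?D)))
         \<le> real (card (cond_set U V d H1' (insert (a,b) H2))) * (real (d p - degG H1' p) * real (d q - degG H1' q))"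
    by (rule UB[OF H1'(1) H2' p q pq D])
  have "Rl \<le> real (Msum U d) - real (card H1') - (2 * real (Jd U V d) + 2 * real (maxseq (U \<union> V) d) * (1 + real ?D))"
    using RlE H1'(2) by simp
  then have "real (card {G\<in>cond_set U V d H1' (insert (a,b) H2). (p,q)\<in>G}) * Rl \<le>
     real (card {G\<in>cond_set U V d H1' (insert (a,b) H2). (p,q)\<in>G}) *
           (real (Msum U d) - real (card H1') - (2 * real (Jd U V d) + 2 * real (maxseq (U \<union> V) d) * (1 + real ?D)))"
    by (intro mult_left_mono) auto
  then show ?thesis using u by linarith
qed

lemma card_ins_le: "finite H \<Longrightarrow> card (insert e H) \<le> card H + 1"
  by (simp add: card_insert_if)

lemma bad1_pair:
  assumes x: "x \<in> U" and y: "y \<in> V"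
  shows "real (card {G\<in>cond_set U V d H1 (insert (a,b) H2). (a,y)\<in>G - H1 \<and> (x,b)\<in>G - H1 \<and> (x,y)\<in>G}) * Rl
    \<le> real (card {G\<in>cond_set U V d H1 (insert (a,b) H2). (x,b)\<in>G - H1 \<and> (x,y)\<in>G}) * (real (d a - degG H1 a) * real (d y))"
proof (cases "{G\<in>cond_set U V d H1 (insert (a,b) H2). (a,y)\<in>G - H1 \<and> (x,b)\<in>G - H1 \<and> (x,y)\<in>G} = {}")
  case True
  then show ?thesis by (simp only: card.empty of_nat_0 mult_zero_left) (simp)
next
  case False
  then obtain G0 where G0: "G0 \<in> cond_set U V d H1 (insert (a,b) H2)" "(a,y)\<in>G0" "(a,y) \<notin> H1"
    "(x,b) \<in> G0" "(x,b) \<notin> H1" by blast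
  have xa: "x \<noteq> a" using G0 by (auto simp: cond_set_def)
  define H1' where "H1' = insert (x,b) (insert (x,y) H1)"
  have fH1: "finite H1" using finG H1 by blast
  have H1'UV: "H1' \<subseteq> U \<times> V" using H1 x y b by (auto simp: H1'_def)
  have cH1': "card H1' \<le> card H1 + 2"
    using card_ins_le[of "insert (x,y) H1" "(x,b)"] card_ins_le[OF fH1, of "(x,y)"] fH1
    unfolding H1'_def by simp
  have ayH1': "(a,y) \<notin> H1'" using G0 xa by (auto simp: H1'_def)
  have e1: "{G\<in>cond_set U V d H1' (insert (a,b) H2). (a,y)\<in>G} =
      {G\<in>cond_set U V d H1 (insert (a,b) H2). (a,y)\<in>G - H1 \<and> (x,b)\<in>G - H1 \<and> (x,y)\<in>G}"
    using G0 by (auto simp: cond_set_def H1'_def)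
  have e2: "cond_set U V d H1' (insert (a,b) H2) =
      {G\<in>cond_set U V d H1 (insert (a,b) H2). (x,b)\<in>G - H1 \<and> (x,y)\<in>G}"
    using G0 by (auto simp: cond_set_def H1'_def)
  have u: "real (card {G\<in>cond_set U V d H1' (insert (a,b) H2). (a,y)\<in>G}) * Rl
     \<le> real (card (cond_set U V d H1' (insert (a,b) H2))) * (real (d a - degG H1' a) * real (d y - degG H1' y))"
    by (rule UBc[OF H1'UV cH1' a y ayH1'])
  have fH1': "finite H1'" using finG H1'UV by blast
  have "degG H1 a \<le> degG H1' a" by (rule degG_mono[OF fH1']) (auto simp: H1'_def)
  then have m1: "real (d a - degG H1' a) \<le> real (d a - degG H1 a)" by simp
  have m2: "real (d y - degG H1' y) \<le> real (d y)" by simp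
  have "real (d a - degG H1' a) * real (d y - degG H1' y) \<le> real (d a - degG H1 a) * real (d y)"
    using m1 m2 by (intro mult_mono) auto
  then have "real (card (cond_set U V d H1' (insert (a,b) H2))) * (real (d a - degG H1' a) * real (d y - degG H1' y))
     \<le> real (card (cond_set U V d H1' (insert (a,b) H2))) * (real (d a - degG H1 a) * real (d y))"
    by (intro mult_left_mono) auto
  then show ?thesis using u e1 e2 by simp
qed

lemma bad2_pair:
  assumes xy: "(x,y) \<in> H2"
  shows "real (card {G\<in>cond_set U V d H1 (insert (a,b) H2). (a,y)\<in>G - H1 \<and> (x,b)\<in>G - H1}) * (Rl * Rl)
    \<le> real (card (cond_set U V d H1 (insert (a,b) H2))) * (real (maxseq U d) * real (d b - degG H1 b))
        * (real (d a - degG H1 a) * real (maxseq V d))"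
proof (cases "(x,b) \<in> H1 \<or> (a,y) \<in> H1")
  case True
  then have "{G\<in>cond_set U V d H1 (insert (a,b) H2). (a,y)\<in>G - H1 \<and> (x,b)\<in>G - H1} = {}" by auto
  then show ?thesis by (simp only: card.empty of_nat_0 mult_zero_left) (simp)
next
  case False
  let ?B = "cond_set U V d H1 (insert (a,b) H2)"
  have x: "x \<in> U" and y: "y \<in> V" using xy H2 by auto
  have fH1: "finite H1" using finG H1 by blast
  have s1: "real (card {G\<in>?B. (x,b)\<in>G}) * Rl \<le> real (card ?B) * (real (d x - degG H1 x) * real (d b - degG H1 b))"
    by (rule UBc[OF H1 _ x b]) (use False in auto)
  have "real (d x - degG H1 x) \<le> real (maxseq U d)" using maxseq_ge[OF finU x, of d] by simp
  then have s1': "real (card {G\<in>?B. (x,b)\<in>G}) * Rl \<le> real (card ?B) * (real (maxseq U d) * real (d b - degG H1 b))"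
    using s1 by (smt (verit) mult_left_mono mult_right_mono of_nat_0_le_iff)
  have H1'UV: "insert (x,b) H1 \<subseteq> U \<times> V" using H1 x b by auto
  have cH1': "card (insert (x,b) H1) \<le> card H1 + 2" using card_ins_le[OF fH1, of "(x,b)"] by simp
  have ayn: "(a,y) \<notin> insert (x,b) H1" using False xy abH2 by auto
  have s2: "real (card {G\<in>cond_set U V d (insert (x,b) H1) (insert (a,b) H2). (a,y)\<in>G}) * Rl
     \<le> real (card (cond_set U V d (insert (x,b) H1) (insert (a,b) H2))) * (real (d a - degG (insert (x,b) H1) a) * real (d y - degG (insert (x,b) H1) y))"
    by (rule UBc[OF H1'UV cH1' a y ayn])
  have e1: "cond_set U V d (insert (x,b) H1) (insert (a,b) H2) = {G\<in>?B. (x,b)\<in>G}" by (rule cond_ins1)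
  have e2: "{G\<in>cond_set U V d (insert (x,b) H1) (insert (a,b) H2). (a,y)\<in>G} =
      {G\<in>?B. (a,y)\<in>G - H1 \<and> (x,b)\<in>G - H1}" using False by (auto simp: cond_ins1)
  have "degG H1 a \<le> degG (insert (x,b) H1) a" by (rule degG_mono) (use fH1 in auto)
  then have m1: "real (d a - degG (insert (x,b) H1) a) \<le> real (d a - degG H1 a)" by simp
  have m2: "real (d y - degG (insert (x,b) H1) y) \<le> real (maxseq V d)" using maxseq_ge[OF finV y, of d] by simp
  have "real (d a - degG (insert (x,b) H1) a) * real (d y - degG (insert (x,b) H1) y) \<le> real (d a - degG H1 a) * real (maxseq V d)"
    using m1 m2 by (intro mult_mono) auto
  then have s2': "real (card {G\<in>?B. (a,y)\<in>G - H1 \<and> (x,b)\<in>G - H1}) * Rl \<le> real (card {G\<in>?B. (x,b)\<in>G}) * (real (d a - degG H1 a) * real (maxseq V d))"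
    using s2 e1 e2 by (smt (verit) mult_left_mono of_nat_0_le_iff)
  let ?X = "real (card {G\<in>?B. (a,y)\<in>G - H1 \<and> (x,b)\<in>G - H1})"
  let ?Y = "real (card {G\<in>?B. (x,b)\<in>G})"
  let ?c = "real (d a - degG H1 a) * real (maxseq V d)"
  have c0: "0 \<le> ?c" by simp
  have "?X * (Rl * Rl) = (?X * Rl) * Rl" by simp
  also have "\<dots> \<le> (?Y * ?c) * Rl" using s2' Rl0 by (rule mult_right_mono)
  also have "\<dots> = (?Y * Rl) * ?c" by simp
  also have "\<dots> \<le> (real (card ?B) * (real (maxseq U d) * real (d b - degG H1 b))) * ?c"
    using s1' c0 by (rule mult_right_mono)
  finally show ?thesis by simp
qed

lemma inner_J:
  assumes G: "G \<in> cond_set U V d H1 (insert (a,b) H2)"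
  shows "(\<Sum>p\<in>{p\<in>U \<times> V. (fst p, b)\<in>G - H1 \<and> p\<in>G}. real (d (snd p)))
     \<le> real (d b - degG H1 b) * real (Jd U V d)"
proof -
  have Gb: "G \<in> bigraphs U V d" and HG: "H1 \<subseteq> G" using G by (auto simp: cond_set_def)
  have GUV: "G \<subseteq> U \<times> V" by (rule big_sub[OF Gb])
  let ?X = "{x. (x,b) \<in> G - H1}"
  let ?N = "\<lambda>x. {y. (x,y) \<in> G}"
  have eq: "{p\<in>U \<times> V. (fst p, b)\<in>G - H1 \<and> p\<in>G} = Sigma ?X ?N" using GUV by auto
  have fX: "finite ?X"
  proof -
    have "?X \<subseteq> U" using GUV by auto
    then show ?thesis using finU finite_subset by blast
  qed
  have fN: "finite (?N x)" for x
  proof -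
    have "?N x \<subseteq> V" using GUV by auto
    then show ?thesis using finV finite_subset by blast
  qed
  have "(\<Sum>p\<in>{p\<in>U \<times> V. (fst p, b)\<in>G - H1 \<and> p\<in>G}. real (d (snd p)))
      = (\<Sum>x\<in>?X. \<Sum>y\<in>?N x. real (d y))"
    unfolding eq by (subst sum.Sigma) (use fX fN in \<open>auto simp: case_prod_beta\<close>)
  also have "\<dots> \<le> (\<Sum>x\<in>?X. real (Jd U V d))"
  proof (rule sum_mono)
    fix x assume "x \<in> ?X"
    then have xU: "x \<in> U" using GUV by auto
    have "(\<Sum>y\<in>?N x. d y) \<le> Jd U V d" by (rule J_U[OF Gb xU])
    then show "(\<Sum>y\<in>?N x. real (d y)) \<le> real (Jd U V d)"
      by (simp only: of_nat_sum[symmetric] of_nat_le_iff)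
  qed
  also have "\<dots> = real (card ?X) * real (Jd U V d)" by simp
  also have "card ?X = d b - degG H1 b" by (rule resid_V[OF Gb HG b])
  finally show ?thesis .
qed

lemma bad1_sum:
  "(\<Sum>G\<in>cond_set U V d H1 (insert (a,b) H2).
      real (card {p\<in>U \<times> V. (a, snd p)\<in>G - H1 \<and> (fst p, b)\<in>G - H1 \<and> p\<in>G})) * Rl
   \<le> real (card (cond_set U V d H1 (insert (a,b) H2))) *
      (real (d a - degG H1 a) * real (d b - degG H1 b) * real (Jd U V d))"
proof -
  let ?B = "cond_set U V d H1 (insert (a,b) H2)"
  let ?ra = "real (d a - degG H1 a)"
  have fB: "finite ?B" by (rule finS)
  have fP: "finite (U \<times> V)" using finU finV by simp
  have "(\<Sum>G\<in>?B. real (card {p\<in>U \<times> V. (a, snd p)\<in>G - H1 \<and> (fst p, b)\<in>G - H1 \<and> p\<in>G}))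
      = (\<Sum>G\<in>?B. \<Sum>p\<in>{p\<in>U \<times> V. (a, snd p)\<in>G - H1 \<and> (fst p, b)\<in>G - H1 \<and> p\<in>G}. (1::real))" by simp
  also have "\<dots> = (\<Sum>p\<in>U \<times> V. real (card {G\<in>?B. (a, snd p)\<in>G - H1 \<and> (fst p, b)\<in>G - H1 \<and> p\<in>G}) * 1)"
    by (rule sum_card_swap[OF fB fP])
  finally have s1: "(\<Sum>G\<in>?B. real (card {p\<in>U \<times> V. (a, snd p)\<in>G - H1 \<and> (fst p, b)\<in>G - H1 \<and> p\<in>G})) * Rl
     = (\<Sum>p\<in>U \<times> V. real (card {G\<in>?B. (a, snd p)\<in>G - H1 \<and> (fst p, b)\<in>G - H1 \<and> p\<in>G}) * Rl)"
    by (simp add: sum_distrib_right)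
  also have "\<dots> \<le> (\<Sum>p\<in>U \<times> V. real (card {G\<in>?B. (fst p, b)\<in>G - H1 \<and> p\<in>G}) * (?ra * real (d (snd p))))"
  proof (rule sum_mono)
    fix p assume p: "p \<in> U \<times> V"
    obtain x y where pe: "p = (x,y)" by (cases p)
    have "x \<in> U" "y \<in> V" using p pe by auto
    from bad1_pair[OF this] show "real (card {G\<in>?B. (a, snd p)\<in>G - H1 \<and> (fst p, b)\<in>G - H1 \<and> p\<in>G}) * Rl
        \<le> real (card {G\<in>?B. (fst p, b)\<in>G - H1 \<and> p\<in>G}) * (?ra * real (d (snd p)))"
      unfolding pe by simp
  qed
  also have "\<dots> = ?ra * (\<Sum>p\<in>U \<times> V. real (card {G\<in>?B. (fst p, b)\<in>G - H1 \<and> p\<in>G}) * real (d (snd p)))"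
    by (simp add: sum_distrib_left algebra_simps)
  also have "(\<Sum>p\<in>U \<times> V. real (card {G\<in>?B. (fst p, b)\<in>G - H1 \<and> p\<in>G}) * real (d (snd p)))
     = (\<Sum>G\<in>?B. \<Sum>p\<in>{p\<in>U \<times> V. (fst p, b)\<in>G - H1 \<and> p\<in>G}. real (d (snd p)))"
    by (rule sum_card_swap[OF fB fP, symmetric])
  also have "\<dots> \<le> (\<Sum>G\<in>?B. real (d b - degG H1 b) * real (Jd U V d))"
    by (rule sum_mono) (rule inner_J)
  also have "\<dots> = real (card ?B) * (real (d b - degG H1 b) * real (Jd U V d))" by simp
  finally show ?thesis
    by (smt (verit, ccfv_SIG) mult.commute mult.left_commute mult_left_mono of_nat_0_le_iff)
qed

lemma bad2_sum:
  "(\<Sum>G\<in>cond_set U V d H1 (insert (a,b) H2).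
      real (card {p\<in>H2. (a, snd p)\<in>G - H1 \<and> (fst p, b)\<in>G - H1})) * (Rl * Rl)
   \<le> real (card H2) * (real (card (cond_set U V d H1 (insert (a,b) H2))) * (real (maxseq U d) * real (d b - degG H1 b))
        * (real (d a - degG H1 a) * real (maxseq V d)))"
proof -
  let ?B = "cond_set U V d H1 (insert (a,b) H2)"
  let ?K = "real (card ?B) * (real (maxseq U d) * real (d b - degG H1 b)) * (real (d a - degG H1 a) * real (maxseq V d))"
  have fB: "finite ?B" by (rule finS)
  have fP: "finite H2" using finG H2 by blast
  have "(\<Sum>G\<in>?B. real (card {p\<in>H2. (a, snd p)\<in>G - H1 \<and> (fst p, b)\<in>G - H1}))
      = (\<Sum>G\<in>?B. \<Sum>p\<in>{p\<in>H2. (a, snd p)\<in>G - H1 \<and> (fst p, b)\<in>G - H1}. (1::real))" by simp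
  also have "\<dots> = (\<Sum>p\<in>H2. real (card {G\<in>?B. (a, snd p)\<in>G - H1 \<and> (fst p, b)\<in>G - H1}) * 1)"
    by (rule sum_card_swap[OF fB fP])
  finally have s1: "(\<Sum>G\<in>?B. real (card {p\<in>H2. (a, snd p)\<in>G - H1 \<and> (fst p, b)\<in>G - H1})) * (Rl * Rl)
     = (\<Sum>p\<in>H2. real (card {G\<in>?B. (a, snd p)\<in>G - H1 \<and> (fst p, b)\<in>G - H1}) * (Rl * Rl))"
    by (simp add: sum_distrib_right)
  also have "\<dots> \<le> (\<Sum>p\<in>H2. ?K)"
  proof (rule sum_mono)
    fix p assume p: "p \<in> H2"
    obtain x y where pe: "p = (x,y)" by (cases p)
    from bad2_pair[of x y] p pe show "real (card {G\<in>?B. (a, snd p)\<in>G - H1 \<and> (fst p, b)\<in>G - H1}) * (Rl * Rl) \<le> ?K"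
      by simp
  qed
  also have "\<dots> = real (card H2) * ?K" by simp
  finally show ?thesis .
qed

lemma RR_lower:
  assumes G: "G \<in> cond_set U V d H1 (insert (a,b) H2)"
  shows "(d a - degG H1 a) * (d b - degG H1 b) \<le> card (RR H1 H2 a b G)
     + card {p\<in>U \<times> V. (a, snd p)\<in>G - H1 \<and> (fst p, b)\<in>G - H1 \<and> p\<in>G}
     + card {p\<in>H2. (a, snd p)\<in>G - H1 \<and> (fst p, b)\<in>G - H1}"
proof -
  have Gb: "G \<in> bigraphs U V d" and HG: "H1 \<subseteq> G" using G by (auto simp: cond_set_def)
  have GUV: "G \<subseteq> U \<times> V" by (rule big_sub[OF Gb])
  let ?P = "{x. (x,b) \<in> G - H1} \<times> {y. (a,y) \<in> G - H1}"
  let ?R1 = "RR H1 H2 a b G"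
  let ?R2 = "{p\<in>U \<times> V. (a, snd p)\<in>G - H1 \<and> (fst p, b)\<in>G - H1 \<and> p\<in>G}"
  let ?R3 = "{p\<in>H2. (a, snd p)\<in>G - H1 \<and> (fst p, b)\<in>G - H1}"
  have cP: "card ?P = (d b - degG H1 b) * (d a - degG H1 a)"
    using resid_U[OF Gb HG a] resid_V[OF Gb HG b] by (simp add: card_cartesian_product)
  have sub: "?P \<subseteq> ?R1 \<union> ?R2 \<union> ?R3" using GUV by (auto simp: RR_def)
  have f1: "finite ?R1"
  proof -
    have "?R1 \<subseteq> U \<times> V" by (auto simp: RR_def)
    then show ?thesis using finU finV by (meson finite_SigmaI finite_subset)
  qed
  have f2: "finite ?R2" using finU finV by simp
  have f3: "finite ?R3" using finG H2 by simp
  have "card ?P \<le> card (?R1 \<union> ?R2 \<union> ?R3)" by (rule card_mono) (use f1 f2 f3 sub in auto)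
  also have "\<dots> \<le> card ?R1 + card ?R2 + card ?R3"
    by (meson add_le_mono1 card_Un_le order_trans)
  finally show ?thesis using cP by (simp add: mult.commute)
qed

lemma LB_main:
  "real (card (cond_set U V d H1 (insert (a,b) H2))) * (real (d a - degG H1 a) * real (d b - degG H1 b))
   \<le> real (card {G\<in>cond_set U V d H1 H2. (a,b)\<in>G}) * (real (Msum U d) - real (card H1))
     + (\<Sum>G\<in>cond_set U V d H1 (insert (a,b) H2). real (card {p\<in>U \<times> V. (a, snd p)\<in>G - H1 \<and> (fst p, b)\<in>G - H1 \<and> p\<in>G}))
     + (\<Sum>G\<in>cond_set U V d H1 (insert (a,b) H2). real (card {p\<in>H2. (a, snd p)\<in>G - H1 \<and> (fst p, b)\<in>G - H1}))"
proof -
  let ?B = "cond_set U V d H1 (insert (a,b) H2)"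
  let ?A = "{G\<in>cond_set U V d H1 H2. (a,b)\<in>G}"
  let ?R = "real (Msum U d) - real (card H1)"
  let ?b1 = "\<lambda>G. real (card {p\<in>U \<times> V. (a, snd p)\<in>G - H1 \<and> (fst p, b)\<in>G - H1 \<and> p\<in>G})"
  let ?b2 = "\<lambda>G. real (card {p\<in>H2. (a, snd p)\<in>G - H1 \<and> (fst p, b)\<in>G - H1})"
  have "real (card ?B) * (real (d a - degG H1 a) * real (d b - degG H1 b))
      = (\<Sum>G\<in>?B. real ((d a - degG H1 a) * (d b - degG H1 b)))" by simp
  also have "\<dots> \<le> (\<Sum>G\<in>?B. real (card (RR H1 H2 a b G)) + ?b1 G + ?b2 G)"
  proof (rule sum_mono)
    fix G assume "G \<in> ?B"
    from RR_lower[OF this] show "real ((d a - degG H1 a) * (d b - degG H1 b)) \<le> real (card (RR H1 H2 a b G)) + ?b1 G + ?b2 G"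
      by linarith
  qed
  also have "\<dots> = real (\<Sum>G\<in>?B. card (RR H1 H2 a b G)) + (\<Sum>G\<in>?B. ?b1 G) + (\<Sum>G\<in>?B. ?b2 G)"
    by (simp add: sum.distrib)
  also have "(\<Sum>G\<in>?B. card (RR H1 H2 a b G)) = (\<Sum>G\<in>?A. card (FF H1 H2 a b G))"
    using switch_card[OF a b abH1 abH2] cond_ins2 by simp
  also have "real (\<Sum>G\<in>?A. card (FF H1 H2 a b G)) \<le> (\<Sum>G\<in>?A. ?R)"
  proof -
    have "real (\<Sum>G\<in>?A. card (FF H1 H2 a b G)) = (\<Sum>G\<in>?A. real (card (FF H1 H2 a b G)))" by simp
    also have "\<dots> \<le> (\<Sum>G\<in>?A. ?R)"
    proof (rule sum_mono)
      fix G assume G: "G \<in> ?A"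
      have Gb: "G \<in> bigraphs U V d" and HG: "H1 \<subseteq> G" using G by (auto simp: cond_set_def)
      have fG: "finite G" using finG big_sub Gb by blast
      have "card (FF H1 H2 a b G) \<le> card (G - H1)"
        by (rule card_mono) (use fG in \<open>auto simp: FF_def\<close>)
      moreover have "card (G - H1) = card G - card H1" using HG fG by (meson card_Diff_subset rev_finite_subset)
      moreover have "card H1 \<le> card G" using HG fG by (simp add: card_mono)
      moreover have "card G = Msum U d" by (rule big_card[OF Gb])
      ultimately show "real (card (FF H1 H2 a b G)) \<le> ?R" by simp
    qed
    finally show ?thesis .
  qed
  also have "(\<Sum>G\<in>?A. ?R) = real (card ?A) * ?R" by simp
  finally show ?thesis by simp
qed

lemma LB_final:
  "real (card (cond_set U V d H1 (insert (a,b) H2))) * (real (d a - degG H1 a) * real (d b - degG H1 b)) * (Rl * Rl)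
   \<le> real (card {G\<in>cond_set U V d H1 H2. (a,b)\<in>G}) * (real (Msum U d) - real (card H1)) * (Rl * Rl)
     + real (card (cond_set U V d H1 (insert (a,b) H2))) *
      (real (d a - degG H1 a) * real (d b - degG H1 b) * real (Jd U V d)) * Rl
     + real (card H2) * (real (card (cond_set U V d H1 (insert (a,b) H2))) * (real (maxseq U d) * real (d b - degG H1 b))
        * (real (d a - degG H1 a) * real (maxseq V d)))"
proof -
  have R2: "0 \<le> Rl * Rl" by simp
  have m: "real (card (cond_set U V d H1 (insert (a,b) H2))) * (real (d a - degG H1 a) * real (d b - degG H1 b)) * (Rl * Rl)
   \<le> (real (card {G\<in>cond_set U V d H1 H2. (a,b)\<in>G}) * (real (Msum U d) - real (card H1))
     + (\<Sum>G\<in>cond_set U V d H1 (insert (a,b) H2). real (card {p\<in>U \<times> V. (a, snd p)\<in>G - H1 \<and> (fst p, b)\<in>G - H1 \<and> p\<in>G}))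
     + (\<Sum>G\<in>cond_set U V d H1 (insert (a,b) H2). real (card {p\<in>H2. (a, snd p)\<in>G - H1 \<and> (fst p, b)\<in>G - H1}))) * (Rl * Rl)"
    by (rule mult_right_mono[OF LB_main R2])
  have b1: "(\<Sum>G\<in>cond_set U V d H1 (insert (a,b) H2). real (card {p\<in>U \<times> V. (a, snd p)\<in>G - H1 \<and> (fst p, b)\<in>G - H1 \<and> p\<in>G})) * (Rl * Rl)
     \<le> real (card (cond_set U V d H1 (insert (a,b) H2))) *
      (real (d a - degG H1 a) * real (d b - degG H1 b) * real (Jd U V d)) * Rl"
    using mult_right_mono[OF bad1_sum Rl0] by (simp add: mult.assoc)
  show ?thesis using m b1 bad2_sum by (simp add: distrib_right)
qed

end
end



lemma arith_core:
  fixes p q m t1 t2 t4 x :: real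
  assumes p0: "0 \<le> p" and q0: "0 \<le> q" and s0: "0 < p + q"
    and nn: "0 \<le> m" "0 \<le> t1" "0 \<le> t2" "0 \<le> t4"
    and xdef: "x = t1 + t2 + m + t4" and x16: "x \<le> 1/16"
    and up: "p * (1 - 2*t1 - 2*t2) \<le> (p+q) * m"
    and low: "q * m * (1 - 2*t1 - 4*t4) \<le> p"
  shows "\<bar>p / (p+q) - m\<bar> \<le> 5 * m * x"
proof -
  define s where "s = p + q"
  have s0': "0 < s" using s0 s_def by simp
  define c where "c = 1 - 2*t1 - 2*t2"
  have c1: "(1 + 5*x) * c \<ge> 1"
  proof -
    have "c \<ge> 1 - 2*x" using c_def xdef nn by simp
    moreover have "1 - 2*x > 0" using x16 by simp
    moreover have "(1 + 5*x) * (1 - 2*x) \<ge> 1"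
    proof -
      have "(1 + 5*x) * (1 - 2*x) = 1 + x * (3 - 10 * x)" by (simp add: algebra_simps)
      moreover have "x * (3 - 10*x) \<ge> 0" using x16 xdef nn by (intro mult_nonneg_nonneg) auto
      ultimately show ?thesis by simp
    qed
    moreover have "0 \<le> 1 + 5*x" using xdef nn by simp
    ultimately show ?thesis by (smt (verit) mult_left_mono)
  qed
  have upper: "p \<le> s * m * (1 + 5*x)"
  proof -
    have "p \<le> p * ((1 + 5*x) * c)" using c1 p0 by (metis mult_left_mono mult.right_neutral)
    also have "\<dots> = (1 + 5*x) * (p * c)" by simp
    also have "\<dots> \<le> (1 + 5*x) * (s * m)"
      using up c_def s_def xdef nn by (intro mult_left_mono) auto
    finally show ?thesis by (simp add: algebra_simps)
  qed
  define rho where "rho = 2*t1 + 4*t4"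
  have rho0: "0 \<le> rho" "rho \<le> 1" using rho_def nn xdef x16 by auto
  have lower: "s * m * (1 - rho - m) \<le> p"
  proof (rule ccontr)
    assume "\<not> ?thesis"
    then have lt: "p < s * m * (1 - rho - m)" by simp
    then have mpos: "m > 0" using p0 nn(1) s0' by (cases "m = 0") auto
    have l2: "(s - p) * m * (1 - rho) \<le> p" using low s_def rho_def by (simp add: algebra_simps)
    have "s * m * (1 - rho) \<le> p * (1 + m * (1 - rho))" using l2 by (simp add: algebra_simps)
    also have "\<dots> < s * m * (1 - rho - m) * (1 + m * (1 - rho))"
      using lt rho0 mpos by (intro mult_strict_right_mono) (auto intro: add_pos_nonneg)
    finally have "s * m * (1 - rho) < s * m * ((1 - rho - m) * (1 + m * (1 - rho)))" by (simp add: mult.assoc)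
    then have "1 - rho < (1 - rho - m) * (1 + m * (1 - rho))"
      using s0' mpos by (metis mult_less_cancel_left_pos mult_pos_pos)
    moreover have "(1 - rho - m) * (1 + m * (1 - rho)) = (1 - rho) + m * ((1-rho)*(1-rho) - 1 - m * (1 - rho))"
      by (simp add: algebra_simps)
    moreover have "(1-rho)*(1-rho) - 1 - m * (1 - rho) \<le> 0"
    proof -
      have "(1-rho)*(1-rho) \<le> 1" using rho0 by (smt (verit) mult_le_one)
      moreover have "m * (1 - rho) \<ge> 0" using mpos rho0 by simp
      ultimately show ?thesis by simp
    qed
    ultimately show False using mpos by (smt (verit) mult_nonneg_nonpos)
  qed
  have "s * m * (1 - 5*x) \<le> s * m * (1 - rho - m)"
    using s0' nn rho_def xdef by (intro mult_left_mono) auto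
  then have low2: "s * m * (1 - 5*x) \<le> p" using lower by simp
  have "p / s \<le> m * (1 + 5*x)" using upper s0' by (simp add: divide_le_eq mult.commute mult.left_commute)
  moreover have "m * (1 - 5*x) \<le> p / s" using low2 s0' by (simp add: le_divide_eq mult.commute mult.left_commute)
  ultimately show ?thesis unfolding s_def by (simp add: abs_le_iff algebra_simps)
qed

lemma main_bound:
  assumes finU: "finite U" and finV: "finite V" and disj: "U \<inter> V = {}"
    and H1: "H1 \<subseteq> U \<times> V" and H2: "H2 \<subseteq> U \<times> V"
    and hdeg: "\<forall>w\<in>U \<union> V. degG H1 w \<le> d w"
    and u: "u \<in> U" and v: "v \<in> V" and uvH1: "(u,v) \<notin> H1" and uvH2: "(u,v) \<notin> H2"
    and cH1: "card H1 < Msum U d" and Sne: "cond_set U V d H1 H2 \<noteq> {}"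
    and x16: "xi U V d H1 H2 u v \<le> 1/16"
  shows "\<bar>cond_prob U V d H1 H2 (u,v) - (real (d u) - real (degG H1 u)) * (real (d v) - real (degG H1 v)) / (real (Msum U d) - real (card H1))\<bar>
     \<le> 5 * ((real (d u) - real (degG H1 u)) * (real (d v) - real (degG H1 v)) / (real (Msum U d) - real (card H1))) * xi U V d H1 H2 u v"
proof -
  define R where "R = real (Msum U d) - real (card H1)"
  have R0: "R > 0" using cH1 R_def by simp
  define ru where "ru = real (d u - degG H1 u)"
  define rv where "rv = real (d v - degG H1 v)"
  have eu: "real (d u) - real (degG H1 u) = ru" using hdeg u by (simp add: ru_def of_nat_diff)
  have ev: "real (d v) - real (degG H1 v) = rv" using hdeg v by (simp add: rv_def of_nat_diff)
  define J where "J = real (Jd U V d)"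
  define De where "De = real (maxseq (U \<union> V) d)"
  define D2 where "D2 = real (maxdeg U V H2)"
  define e2 where "e2 = real (card H2)"
  define Ds where "Ds = real (maxseq U d)"
  define Dt where "Dt = real (maxseq V d)"
  define t1 where "t1 = J / R"
  define t2 where "t2 = De * (1 + D2) / R"
  define m where "m = ru * rv / R"
  define t4 where "t4 = e2 * Ds * Dt / R^2"
  have nn: "0 \<le> J" "0 \<le> De" "0 \<le> D2" "0 \<le> e2" "0 \<le> Ds" "0 \<le> Dt" "0 \<le> ru" "0 \<le> rv"
    by (simp_all add: J_def De_def D2_def e2_def Ds_def Dt_def ru_def rv_def)
  have tnn: "0 \<le> t1" "0 \<le> t2" "0 \<le> m" "0 \<le> t4"
    using nn R0 by (simp_all add: t1_def t2_def m_def t4_def)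
  have xi_eq: "xi U V d H1 H2 u v = t1 + t2 + m + t4"
    unfolding xi_def eu ev t1_def t2_def m_def t4_def
    by (simp add: R_def J_def De_def D2_def e2_def Ds_def Dt_def add_divide_distrib)
  let ?S = "cond_set U V d H1 H2"
  let ?A = "{G\<in>?S. (u,v)\<in>G}"
  let ?B = "cond_set U V d H1 (insert (u,v) H2)"
  define p where "p = real (card ?A)"
  define q where "q = real (card ?B)"
  have fS: "finite ?S" by (rule finS[OF finU finV disj])
  have Beq: "?B = {G\<in>?S. (u,v)\<notin>G}" by (rule cond_ins2[OF finU finV disj])
  have cS: "card ?S = card ?A + card ?B"
  proof -
    have "?S = ?A \<union> {G\<in>?S. (u,v)\<notin>G}" by auto
    then have "card ?S = card (?A \<union> {G\<in>?S. (u,v)\<notin>G})" by simp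
    also have "\<dots> = card ?A + card {G\<in>?S. (u,v)\<notin>G}"
      by (rule card_Un_disjoint) (use fS in auto)
    finally show ?thesis using Beq by simp
  qed
  have p0: "0 \<le> p" and q0: "0 \<le> q" by (simp_all add: p_def q_def)
  have s0: "0 < p + q"
  proof -
    have "card ?S > 0" using Sne fS by (simp add: card_gt_0_iff)
    then have "0 < card ?A + card ?B" using cS by simp
    then have "0 < real (card ?A + card ?B)" by (simp only: of_nat_0_less_iff)
    then show ?thesis unfolding p_def q_def by simp
  qed
  have cp: "cond_prob U V d H1 H2 (u,v) = p / (p + q)"
    unfolding cond_prob_def p_def q_def using cS by simp
  have Dfact: "\<forall>w\<in>U \<union> V. degG H2 w \<le> maxdeg U V H2"
    using maxdeg_ge[OF finU finV disj] by blast
  have ub: "p * (R - (2 * J + 2 * De * (1 + D2))) \<le> (p + q) * (ru * rv)"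
    using UB[where d=d, OF finU finV disj H1 H2 u v uvH1 Dfact] cS
    unfolding p_def q_def R_def J_def De_def D2_def ru_def rv_def by simp
  have up: "p * (1 - 2*t1 - 2*t2) \<le> (p+q) * m"
  proof -
    have "p * (1 - 2*t1 - 2*t2) * R = p * (R - (2 * J + 2 * De * (1 + D2)))"
      using R0 by (simp add: t1_def t2_def field_simps)
    also have "\<dots> \<le> (p + q) * (ru * rv)" by (rule ub)
    also have "\<dots> = (p+q) * m * R" using R0 by (simp add: m_def)
    finally show ?thesis using R0 by simp
  qed
  have x16': "t1 + t2 + m + t4 \<le> 1/16" using x16 xi_eq by simp
  have low: "q * m * (1 - 2*t1 - 4*t4) \<le> p"
  proof (cases "m = 0")
    case True then show ?thesis using p0 by simp
  next
    case False
    then have "ru \<noteq> 0" by (auto simp: m_def)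
    then have "d u \<ge> 1" using ru_def by (cases "d u") auto
    then have De1: "De \<ge> 1" using maxseq_ge[of "U \<union> V" u d] finU finV u unfolding De_def by simp
    have t1b: "J \<le> R / 16"
    proof -
      have "t1 \<le> 1/16" using x16' tnn by linarith
      then have "t1 * R \<le> (1/16) * R" using R0 by (intro mult_right_mono) auto
      moreover have "J = t1 * R" using R0 by (simp add: t1_def)
      ultimately show ?thesis by simp
    qed
    have t2b: "De * (1 + D2) \<le> R / 16"
    proof -
      have "t2 \<le> 1/16" using x16' tnn by linarith
      then have "t2 * R \<le> (1/16) * R" using R0 by (intro mult_right_mono) auto
      moreover have "De * (1 + D2) = t2 * R" using R0 by (simp add: t2_def)
      ultimately show ?thesis by simp
    qed
    have "1 \<le> De * (1 + D2)" using De1 nn by (smt (verit) mult_le_cancel_left1)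
    then have R16: "16 \<le> R" using t2b by simp
    define Rl where "Rl = R / 2"
    have Rl0: "0 \<le> Rl" using R0 Rl_def by simp
    have RlE': "Rl \<le> R - 2 - (2 * J + 2 * De * (1 + (D2 + 1)))"
    proof -
      have "2 * De * (1 + (D2 + 1)) \<le> 4 * (De * (1 + D2))" using nn by (simp add: algebra_simps)
      then show ?thesis using t1b t2b R16 Rl_def by simp
    qed
    have RlE: "Rl \<le> real (Msum U d) - real (card H1) - 2
       - (2 * real (Jd U V d) + 2 * real (maxseq (U \<union> V) d) * (1 + (real (maxdeg U V H2) + 1)))"
      using RlE' unfolding R_def J_def De_def D2_def by simp
    have LB: "q * (ru * rv) * (Rl * Rl) \<le> p * R * (Rl * Rl) + q * (ru * rv * J) * Rl + e2 * (q * (Ds * rv) * (ru * Dt))"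
      using LB_final[where d=d, OF finU finV disj H1 H2 u v uvH1 uvH2 Rl0 RlE]
      unfolding p_def q_def R_def J_def e2_def Ds_def Dt_def ru_def rv_def by simp
    have s1: "ru * rv = m * R" using R0 by (simp add: m_def)
    have s2: "J = t1 * R" using R0 by (simp add: t1_def)
    have s3: "e2 * Ds * Dt = t4 * R^2" using R0 by (simp add: t4_def)
    have eq: "e2 * (q * (Ds * rv) * (ru * Dt)) = t4 * R^2 * q * (ru * rv)"
    proof -
      have "e2 * (q * (Ds * rv) * (ru * Dt)) = (e2 * Ds * Dt) * q * (ru * rv)" by (simp add: algebra_simps)
      also have "\<dots> = t4 * R^2 * q * (ru * rv)" using s3 by simp
      finally show ?thesis .
    qed
    have LB2: "q * (ru * rv) * (Rl * Rl) \<le> p * R * (Rl * Rl) + q * (ru * rv * J) * Rl + t4 * R^2 * q * (ru * rv)"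
      using LB eq by linarith
    have "q * m * (1 - 2*t1 - 4*t4) * (R^3/4) = q * (ru * rv) * (Rl * Rl) - q * (ru * rv * J) * Rl - t4 * R^2 * q * (ru * rv)"
      unfolding s1 s2 by (simp add: Rl_def algebra_simps power2_eq_square power3_eq_cube)
    also have "\<dots> \<le> p * R * (Rl * Rl)" using LB2 by simp
    also have "\<dots> = p * (R^3/4)" by (simp add: Rl_def power3_eq_cube)
    finally have "q * m * (1 - 2*t1 - 4*t4) * (R^3/4) \<le> p * (R^3/4)" .
    moreover have "R^3/4 > 0" using R0 by simp
    ultimately show ?thesis by simp
  qed
  have main: "\<bar>p / (p+q) - m\<bar> \<le> 5 * m * (t1 + t2 + m + t4)"
    by (rule arith_core[OF p0 q0 s0 tnn(3) tnn(1) tnn(2) tnn(4) refl x16' up low])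
  have "(real (d u) - real (degG H1 u)) * (real (d v) - real (degG H1 v)) / (real (Msum U d) - real (card H1)) = m"
    using eu ev by (simp add: m_def R_def)
  then show ?thesis using main cp xi_eq by simp
qed

theorem mainTheorem17:
  shows "\<exists>\<epsilon>>0. \<exists>C. \<forall>U V d H1 H2 u v.
     finite U \<and> finite V \<and> U \<inter> V = {} \<and>
     H1 \<subseteq> U \<times> V \<and> H2 \<subseteq> U \<times> V \<and> H1 \<inter> H2 = {} \<and>
     (\<forall>w \<in> U \<union> V. degG H1 w \<le> d w) \<and>
     u \<in> U \<and> v \<in> V \<and> (u, v) \<notin> H1 \<and> (u, v) \<notin> H2 \<and>
     card H1 < Msum U d \<and>
     cond_set U V d H1 H2 \<noteq> {} \<and>
     xi U V d H1 H2 u v \<le> \<epsilon>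
     \<longrightarrow>
     (let main = (real (d u) - real (degG H1 u)) * (real (d v) - real (degG H1 v))
                   / (real (Msum U d) - real (card H1))
      in \<bar>cond_prob U V d H1 H2 (u, v) - main\<bar> \<le> C * main * xi U V d H1 H2 u v)"
  apply (rule exI[of _ "1/16"])
  apply (rule conjI)
   apply simp
  apply (rule exI[of _ 5])
  apply (intro allI impI)
  apply (elim conjE)
  unfolding Let_def
  apply (rule main_bound; assumption)
  done

end
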